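(* For every $r\in\mathbb{N}$ there exist moulds ${}_r\mathrm{Sem}^\bullet$ on $\mathcal{A}(F)$ and ${}_r\mathrm{sem}^\bullet$ on $A(F)$ such that $$F^r_{\rm Sem}=F_{\rm lin}\Big(\sum_{\mathbf{m}}{}_r\mathrm{Sem}^{\mathbf{m}}D_{\mathbf{m}}\Big)=F_{\rm lin}\Big(\sum_{\mathbf{n}}{}_r\mathrm{sem}^{\mathbf{n}}B_{\mathbf{n}}\Big).$$
   Context: Fix $\nu\ge1$, $\lambda\in\mathbb{C}^\nu$, $\lambda\cdot m=\sum_i\lambda_im_i$. Let $f(x)=(e^{\lambda_1}x_1,\dots,e^{\lambda_\nu}x_\nu)+h(x)$ be a local analytic diffeomorphism of $(\mathbb{C}^\nu,0)$, $F(\varphi)=\varphi\circ f$ its substitution operator on $\mathbb{C}[[x]]$, $F_{\rm lin}(x^m)=e^{\lambda\cdot m}x^m$. An operator is homogeneous of degree $n\in\mathbb{Z}^\nu$ if it maps $x^m$ to a multiple of $x^{m+n}$ for all $m$. Write $F=F_{\rm lin}(\mathrm{Id}+\sum_{n\in A(F)}B_n)=F_{\rm lin}\exp(\sum_{m\in\mathcal{A}(F)}D_m)$ with $B_n$ homogeneous of degree $n$ and $D_m$ homogeneous derivations of degree $m$; $A(F),\mathcal{A}(F)\subset\mathbb{Z}^\nu$ are taken closed under addition (adding degrees carrying the zero operator is harmless). For words, $B_{\mathbf{n}}=B_{n_1}\circ\cdots\circ B_{n_r}$, $D_{\mathbf{m}}$ likewise (identity on the empty word); moulds are complex-valued functions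 on words; sums are formal. A letter $m$ is resonant if $e^{\lambda\cdot m}=1$. Trimmed form up to order $r$: set $F^0_{\rm Sem}=F$; given $F^{i-1}_{\rm Sem}=F_{\rm lin}\exp(\sum_m{}_iD_m)$ with ${}_iD_m$ its homogeneous derivation components of degree $m$, put $\mathbf{V}_i=\sum_{m:\,e^{\lambda\cdot m}\neq1}\frac{{}_iD_m}{1-e^{\lambda\cdot m}}$ and $F^i_{\rm Sem}=\exp(\mathbf{V}_i)\circ F^{i-1}_{\rm Sem}\circ\exp(-\mathbf{V}_i)$. *)

theory Defs
  imports "HOL-Analysis.Analysis"
begin

text \<open>Formal power series in \<nu> variables, \<nu> = CARD('n) for a finite index type 'n.
  A series is its coefficient function on exponent vectors.\<close>

type_synonym 'n mser = "('n \<Rightarrow> nat) \<Rightarrow> complex"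
type_synonym 'n mop = "'n mser \<Rightarrow> 'n mser"

definition mdeg :: "('n::finite \<Rightarrow> nat) \<Rightarrow> nat" where
  "mdeg m = (\<Sum>i\<in>UNIV. m i)"

definition unitv :: "'n \<Rightarrow> 'n \<Rightarrow> nat" where
  "unitv j = (\<lambda>i. if i = j then 1 else 0)"

definition mono :: "('n \<Rightarrow> nat) \<Rightarrow> 'n mser" where
  "mono m = (\<lambda>k. if k = m then 1 else 0)"

text \<open>Coefficient of x^k in f^m = prod_j f_j^(m_j): sum over the ways of choosing one
  monomial from each of the m_j factors f_j (factors indexed by pairs (j,t), t < m j).\<close>
definition mpow_coeff :: "('n::finite \<Rightarrow> 'n mser) \<Rightarrow> ('n \<Rightarrow> nat) \<Rightarrow> ('n \<Rightarrow> nat) \<Rightarrow> complex" where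
  "mpow_coeff f m k =
     (let P = Sigma UNIV (\<lambda>j. {..< m j}) in
      \<Sum>a \<in> {a \<in> PiE P (\<lambda>_. {p. p \<le> k}). \<forall>i. (\<Sum>q\<in>P. a q i) = k i}.
         \<Prod>q\<in>P. f (fst q) (a q))"

text \<open>Substitution phi o f (f without constant term): coefficient of x^k.\<close>
definition subst :: "'n mser \<Rightarrow> ('n::finite \<Rightarrow> 'n mser) \<Rightarrow> 'n mser" where
  "subst \<phi> f = (\<lambda>k. \<Sum>m \<in> {m. mdeg m \<le> mdeg k}. \<phi> m * mpow_coeff f m k)"

text \<open>f(x) = (e^{lam_1} x_1, ..., e^{lam_nu} x_nu) + h(x).\<close>
definition diffeo :: "('n \<Rightarrow> complex) \<Rightarrow> ('n \<Rightarrow> 'n mser) \<Rightarrow> ('n \<Rightarrow> 'n mser)" where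
  "diffeo lam h = (\<lambda>j m. (if m = unitv j then exp (lam j) else 0) + h j m)"

definition Fsub :: "('n::finite \<Rightarrow> complex) \<Rightarrow> ('n \<Rightarrow> 'n mser) \<Rightarrow> 'n mop" where
  "Fsub lam h = (\<lambda>\<phi>. subst \<phi> (diffeo lam h))"

definition ldot :: "('n::finite \<Rightarrow> complex) \<Rightarrow> ('n \<Rightarrow> nat) \<Rightarrow> complex" where
  "ldot lam k = (\<Sum>i\<in>UNIV. lam i * of_nat (k i))"

definition ldeg :: "('n::finite \<Rightarrow> complex) \<Rightarrow> ('n \<Rightarrow> int) \<Rightarrow> complex" where
  "ldeg lam n = (\<Sum>i\<in>UNIV. lam i * of_int (n i))"

definition Flin :: "('n::finite \<Rightarrow> complex) \<Rightarrow> 'n mop" where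
  "Flin lam = (\<lambda>\<phi> k. exp (ldot lam k) * \<phi> k)"

definition Flin_inv :: "('n::finite \<Rightarrow> complex) \<Rightarrow> 'n mop" where
  "Flin_inv lam = (\<lambda>\<phi> k. exp (- ldot lam k) * \<phi> k)"

text \<open>Homogeneous component of degree n of a (continuous linear) operator T:
  it sends x^p to [x^(p+n)] T(x^p) * x^(p+n).\<close>
definition hcomp :: "'n mop \<Rightarrow> ('n \<Rightarrow> int) \<Rightarrow> 'n mop" where
  "hcomp T n = (\<lambda>\<phi> k. if (\<forall>i. 0 \<le> int (k i) - n i)
       then (let p = (\<lambda>i. nat (int (k i) - n i)) in T (mono p) k * \<phi> p) else 0)"

definition opsum :: "('i \<Rightarrow> 'n mop) \<Rightarrow> 'i set \<Rightarrow> 'n mop" where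
  "opsum T I = (\<lambda>\<phi> k. \<Sum>\<^sub>\<infinity> i\<in>I. T i \<phi> k)"

definition mexp :: "'n mop \<Rightarrow> 'n mop" where
  "mexp Z = (\<lambda>\<phi> k. \<Sum>\<^sub>\<infinity> j\<in>(UNIV::nat set). (Z ^^ j) \<phi> k / fact j)"

definition mlog :: "'n mop \<Rightarrow> 'n mop" where
  "mlog G = (\<lambda>\<phi> k. \<Sum>\<^sub>\<infinity> j\<in>{(1::nat)..}.
      ((-1::complex) ^ (j + 1) / of_nat j) * (((\<lambda>\<psi> l. G \<psi> l - \<psi> l) ^^ j) \<phi> k))"

text \<open>B_n: F = F_lin (Id + sum_n B_n), B_n homogeneous of degree n.\<close>
definition Bop :: "('n::finite \<Rightarrow> complex) \<Rightarrow> ('n \<Rightarrow> 'n mser) \<Rightarrow> ('n \<Rightarrow> int) \<Rightarrow> 'n mop" where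
  "Bop lam h n = hcomp (\<lambda>\<phi> k. Flin_inv lam (Fsub lam h \<phi>) k - \<phi> k) n"

text \<open>Homogeneous components of degree m of log(F_lin^{-1} G), i.e. G = F_lin exp(sum_m D_m).\<close>
definition Dcomp :: "('n::finite \<Rightarrow> complex) \<Rightarrow> 'n mop \<Rightarrow> ('n \<Rightarrow> int) \<Rightarrow> 'n mop" where
  "Dcomp lam G m = hcomp (mlog (\<lambda>\<phi>. Flin_inv lam (G \<phi>))) m"

definition Dop :: "('n::finite \<Rightarrow> complex) \<Rightarrow> ('n \<Rightarrow> 'n mser) \<Rightarrow> ('n \<Rightarrow> int) \<Rightarrow> 'n mop" where
  "Dop lam h m = Dcomp lam (Fsub lam h) m"

definition wop :: "('a \<Rightarrow> 'n mop) \<Rightarrow> 'a list \<Rightarrow> 'n mop" where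
  "wop Op w = foldr (\<lambda>n acc. Op n \<circ> acc) w id"

definition mould_sum :: "('a list \<Rightarrow> complex) \<Rightarrow> ('a \<Rightarrow> 'n mop) \<Rightarrow> 'a set \<Rightarrow> 'n mop" where
  "mould_sum M Op A = (\<lambda>\<phi> k. \<Sum>\<^sub>\<infinity> w\<in>lists A. M w * wop Op w \<phi> k)"

fun Semtrim :: "('n::finite \<Rightarrow> complex) \<Rightarrow> ('n \<Rightarrow> 'n mser) \<Rightarrow> nat \<Rightarrow> 'n mop" where
  "Semtrim lam h 0 = Fsub lam h"
| "Semtrim lam h (Suc i) =
     (let G = Semtrim lam h i;
          V = opsum (\<lambda>m \<phi> k. Dcomp lam G m \<phi> k / (1 - exp (ldeg lam m)))
                    {m. exp (ldeg lam m) \<noteq> 1}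
      in mexp V \<circ> G \<circ> mexp (\<lambda>\<phi> k. - V \<phi> k))"

end

theory Submission
  imports Defs "HOL-Computational_Algebra.Formal_Power_Series"
begin


definition valid :: "('n \<Rightarrow> nat) \<Rightarrow> ('n \<Rightarrow> int) \<Rightarrow> bool" where
  "valid k n = (\<forall>i. 0 \<le> int (k i) - n i)"

definition subd :: "('n \<Rightarrow> nat) \<Rightarrow> ('n \<Rightarrow> int) \<Rightarrow> ('n \<Rightarrow> nat)" where
  "subd k n = (\<lambda>i. nat (int (k i) - n i))"

definition homog :: "'n mop \<Rightarrow> ('n \<Rightarrow> int) \<Rightarrow> bool" where
  "homog T n = (\<forall>\<phi> k. T \<phi> k = hcomp T n \<phi> k)"

definition raise :: "('n::finite) mop \<Rightarrow> nat \<Rightarrow> bool" where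
  "raise T a = (\<forall>p k. T (mono p) k \<noteq> 0 \<longrightarrow> mdeg p + a \<le> mdeg k)"

definition wdeg :: "('n \<Rightarrow> int) list \<Rightarrow> ('n \<Rightarrow> int)" where
  "wdeg w = (\<lambda>i. sum_list (map (\<lambda>n. n i) w))"

lemma hcomp_eval:
  "hcomp T n \<phi> k = (if valid k n then T (mono (subd k n)) k * \<phi> (subd k n) else 0)"
  by (simp add: hcomp_def valid_def subd_def Let_def)

definition hc :: "'n mop \<Rightarrow> ('n \<Rightarrow> int) \<Rightarrow> ('n \<Rightarrow> nat) \<Rightarrow> complex" where
  "hc T n k = T (mono (subd k n)) k"

lemma homog_eval:
  assumes "homog T n"
  shows "T \<phi> k = (if valid k n then hc T n k * \<phi> (subd k n) else 0)"
proof -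
  have "T \<phi> k = hcomp T n \<phi> k" using assms unfolding homog_def by blast
  then show ?thesis by (simp only: hcomp_eval hc_def)
qed

lemma mono_eq: "mono p q = (if q = p then 1 else 0)"
  by (simp add: mono_def)

lemma valid_subd_add:
  assumes "valid k n" "valid (subd k n) m"
  shows "valid k (\<lambda>i. n i + m i)" "subd (subd k n) m = subd k (\<lambda>i. n i + m i)"
  using assms by (auto simp: valid_def subd_def algebra_simps)

lemma subd_inj:
  assumes "valid k a" "valid k b" "subd k a = subd k b" shows "a = b"
proof
  fix i
  have "nat (int (k i) - a i) = nat (int (k i) - b i)" using assms(3) unfolding subd_def by meson
  moreover have "0 \<le> int (k i) - a i" "0 \<le> int (k i) - b i" using assms(1,2) unfolding valid_def by auto
  ultimately have "int (k i) - a i = int (k i) - b i" by simp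
  then show "a i = b i" by simp
qed

lemma int_subd: "valid k n \<Longrightarrow> int (subd k n i) = int (k i) - n i"
  by (simp add: valid_def subd_def)

lemma homog_hcomp: "homog (hcomp T n) n"
  unfolding homog_def by (auto simp: hcomp_eval mono_eq)

lemma raise_hcomp: "raise T a \<Longrightarrow> raise (hcomp T n) a"
  unfolding raise_def hcomp_eval by (auto simp: mono_eq split: if_splits)

lemma homog_comp:
  assumes S: "homog S n" and T: "homog T m"
  shows "homog (S \<circ> T) (\<lambda>i. n i + m i)"
  unfolding homog_def hcomp_eval
proof (intro allI)
  fix \<phi> k
  show "(S \<circ> T) \<phi> k = (if valid k (\<lambda>i. n i + m i)
      then (S \<circ> T) (mono (subd k (\<lambda>i. n i + m i))) k * \<phi> (subd k (\<lambda>i. n i + m i)) else 0)"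
    using valid_subd_add[of k n m]
    by (auto simp: homog_eval[OF S] homog_eval[OF T] mono_eq)
qed

lemma raise_comp:
  assumes S: "homog S n" and a: "raise S a" and b: "raise T b"
  shows "raise (S \<circ> T) (a + b)"
  unfolding raise_def
proof (intro allI impI)
  fix p k assume "(S \<circ> T) (mono p) k \<noteq> 0"
  then have v: "valid k n" and s: "hc S n k \<noteq> 0" and t: "T (mono p) (subd k n) \<noteq> 0"
    by (auto simp: homog_eval[OF S] split: if_splits)
  from s have s: "S (mono (subd k n)) k \<noteq> 0" by (simp add: hc_def)
  show "mdeg p + (a + b) \<le> mdeg k" using a b s t unfolding raise_def by fastforce
qed

lemma wop_Nil[simp]: "wop Op [] = id" by (simp add: wop_def)
lemma wop_Cons[simp]: "wop Op (n # w) = Op n \<circ> wop Op w" by (simp add: wop_def)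
lemma wop_append: "wop Op (u @ v) = wop Op u \<circ> wop Op v"
  by (induction u) auto

lemma wdeg_Nil[simp]: "wdeg [] = (\<lambda>i. 0)" by (simp add: wdeg_def)
lemma wdeg_Cons[simp]: "wdeg (n # w) = (\<lambda>i. n i + wdeg w i)" by (simp add: wdeg_def)

lemma valid_zero[simp]: "valid k (\<lambda>i. 0)" by (simp add: valid_def)
lemma subd_zero[simp]: "subd k (\<lambda>i. 0) = k" by (simp add: subd_def)

lemma homog_id: "homog id (\<lambda>i. 0)"
  by (simp add: homog_def hcomp_eval mono_eq)

lemma raise_id: "raise id 0"
  by (simp add: raise_def mono_eq)

lemma homog_wop: "(\<And>n. homog (Op n) n) \<Longrightarrow> homog (wop Op w) (wdeg w)"
  by (induction w) (auto simp: homog_id intro: homog_comp)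

lemma raise_wop: "(\<And>n. homog (Op n) n) \<Longrightarrow> (\<And>n. raise (Op n) 1) \<Longrightarrow> raise (wop Op w) (length w)"
proof (induction w)
  case Nil then show ?case using raise_id by (simp add: id_def)
next
  case (Cons n w)
  have "raise (Op n \<circ> wop Op w) (1 + length w)"
    using raise_comp[of "Op n" n 1 "wop Op w" "length w"] Cons by blast
  then show ?case by (simp add: comp_def)
qed



definition Sdeg :: "nat \<Rightarrow> ('n::finite \<Rightarrow> nat) set" where
  "Sdeg K = {m. mdeg m \<le> K}"

lemma finite_Sdeg: "finite (Sdeg K)"
proof -
  have "Sdeg K \<subseteq> PiE UNIV (\<lambda>_. {..K})"
  proof
    fix m assume "m \<in> Sdeg K"
    then have m: "mdeg m \<le> K" by (simp add: Sdeg_def)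
    have "m i \<le> K" for i
    proof -
      have "m i \<le> sum m UNIV" by (rule member_le_sum) auto
      then show ?thesis using m unfolding mdeg_def by linarith
    qed
    then show "m \<in> PiE UNIV (\<lambda>_. {..K})" by (simp add: PiE_UNIV_domain)
  qed
  then show ?thesis by (rule finite_subset) (simp add: finite_PiE)
qed

definition Dset :: "nat \<Rightarrow> ('n::finite \<Rightarrow> int) set" where
  "Dset K = (\<lambda>(a,b). \<lambda>i. int (a i) - int (b i)) ` (Sdeg K \<times> Sdeg K)"

definition Wset :: "nat \<Rightarrow> ('n::finite \<Rightarrow> int) list set" where
  "Wset K = {w. set w \<subseteq> Dset K \<and> length w \<le> K}"

lemma finite_Wset: "finite (Wset K)"
  unfolding Wset_def Dset_def
  by (rule finite_lists_length_le) (simp add: finite_Sdeg)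

lemma Sdeg_mono: "K \<le> K' \<Longrightarrow> Sdeg K \<subseteq> Sdeg K'"
  by (auto simp: Sdeg_def)

lemma Dset_mono: "K \<le> K' \<Longrightarrow> Dset K \<subseteq> Dset K'"
  unfolding Dset_def using Sdeg_mono by blast

lemma Wset_mono: "K \<le> K' \<Longrightarrow> Wset K \<subseteq> Wset K'"
  unfolding Wset_def using Dset_mono by fastforce

definition delta :: "'a list \<Rightarrow> complex" where
  "delta w = (if w = [] then 1 else 0)"

definition mstar :: "('a list \<Rightarrow> complex) \<Rightarrow> ('a list \<Rightarrow> complex) \<Rightarrow> 'a list \<Rightarrow> complex" where
  "mstar M N w = (\<Sum>i\<le>length w. M (take i w) * N (drop i w))"

primrec mpow :: "('a list \<Rightarrow> complex) \<Rightarrow> nat \<Rightarrow> 'a list \<Rightarrow> complex" where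
  "mpow M 0 = delta"
| "mpow M (Suc j) = mstar M (mpow M j)"

definition mexpm :: "('a list \<Rightarrow> complex) \<Rightarrow> 'a list \<Rightarrow> complex" where
  "mexpm M w = (\<Sum>j\<le>length w. mpow M j w / fact j)"

definition mlogm :: "('a list \<Rightarrow> complex) \<Rightarrow> 'a list \<Rightarrow> complex" where
  "mlogm M w = (\<Sum>j\<in>{1..length w}. (-1) ^ (j + 1) / of_nat j * mpow (\<lambda>u. M u - delta u) j w)"

lemma mpow_vanish: "M [] = 0 \<Longrightarrow> length w < j \<Longrightarrow> mpow M j w = 0"
proof (induction j arbitrary: w)
  case 0 then show ?case by simp
next
  case (Suc j)
  show ?case unfolding mpow.simps mstar_def
  proof (rule sum.neutral, intro ballI)
    fix i assume i: "i \<in> {..length w}"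
    show "M (take i w) * mpow M j (drop i w) = 0"
    proof (cases "i = 0")
      case True then show ?thesis using Suc.prems by simp
    next
      case False
      then have "length (drop i w) < j" using Suc.prems i by auto
      then show ?thesis using Suc.IH Suc.prems by simp
    qed
  qed
qed

lemma locality:
  assumes "homog T n" "raise T a" "\<And>l. mdeg l \<le> mdeg k \<Longrightarrow> \<psi> l = \<psi>' l"
  shows "T \<psi> k = T \<psi>' k"
proof -
  have "hc T n k \<noteq> 0 \<Longrightarrow> mdeg (subd k n) \<le> mdeg k"
    using assms(2) unfolding raise_def hc_def by fastforce
  then show ?thesis using assms(3) by (auto simp: homog_eval[OF assms(1)])
qed

lemma linearity:
  assumes "homog T n"
  shows "T (\<lambda>l. \<Sum>v\<in>S. c v * \<psi> v l) k = (\<Sum>v\<in>S. c v * T (\<psi> v) k)"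
  by (simp add: homog_eval[OF assms] sum_distrib_left sum_distrib_right mult.assoc mult.left_commute)

locale mframe =
  fixes Op :: "('n::finite \<Rightarrow> int) \<Rightarrow> 'n mop" and A :: "('n \<Rightarrow> int) set"
  assumes hom: "homog (Op n) n" and rai: "raise (Op n) 1"
begin

lemma hw: "homog (wop Op w) (wdeg w)" by (rule homog_wop[OF hom])
lemma rw: "raise (wop Op w) (length w)" by (rule raise_wop[OF hom rai])

lemma support: "wop Op w \<phi> k \<noteq> 0 \<Longrightarrow> w \<in> Wset (mdeg k)"
proof (induction w arbitrary: k)
  case Nil then show ?case by (simp add: Wset_def)
next
  case (Cons n w)
  let ?q = "subd k n"
  have e: "Op n (wop Op w \<phi>) k = (if valid k n then hc (Op n) n k * wop Op w \<phi> ?q else 0)"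
    by (rule homog_eval[OF hom])
  from Cons.prems have "Op n (wop Op w \<phi>) k \<noteq> 0" by simp
  then have v: "valid k n" and c: "hc (Op n) n k \<noteq> 0" and t: "wop Op w \<phi> ?q \<noteq> 0"
    unfolding e by (auto split: if_splits)
  from c have c: "Op n (mono ?q) k \<noteq> 0" by (simp add: hc_def)
  have d: "mdeg ?q + 1 \<le> mdeg k" using rai c unfolding raise_def by blast
  have IH: "w \<in> Wset (mdeg ?q)" using Cons.IH t by blast
  have dd: "mdeg ?q \<le> mdeg k" using d by simp
  have "w \<in> Wset (mdeg k)" using Wset_mono[OF dd] IH by blast
  moreover have "n \<in> Dset (mdeg k)"
  proof -
    have "n = (\<lambda>i. int (k i) - int (?q i))" using int_subd[OF v] by auto
    moreover have "k \<in> Sdeg (mdeg k)" "?q \<in> Sdeg (mdeg k)" using d by (auto simp: Sdeg_def)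
    ultimately show ?thesis unfolding Dset_def
      by (intro image_eqI[where x="(k, subd k n)"]) auto
  qed
  moreover have "length w < mdeg k" using IH d by (auto simp: Wset_def)
  ultimately show ?case by (auto simp: Wset_def)
qed

lemma ms_eval:
  assumes "mdeg k \<le> K"
  shows "mould_sum M Op A \<phi> k = (\<Sum>w\<in>lists A \<inter> Wset K. M w * wop Op w \<phi> k)"
proof -
  have "mould_sum M Op A \<phi> k = infsum (\<lambda>w. M w * wop Op w \<phi> k) (lists A \<inter> Wset K)"
    unfolding mould_sum_def
  proof (rule infsum_cong_neutral)
    fix w assume "w \<in> lists A - lists A \<inter> Wset K"
    then have "w \<notin> Wset (mdeg k)" using Wset_mono[OF assms] by blast
    then show "M w * wop Op w \<phi> k = 0" using support[of w \<phi> k] by auto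
  next
    fix w assume "w \<in> lists A \<inter> Wset K - lists A"
    then show "M w * wop Op w \<phi> k = 0" by blast
  next
    fix w show "M w * wop Op w \<phi> k = M w * wop Op w \<phi> k" by (rule refl)
  qed
  moreover have "finite (lists A \<inter> Wset K)" using finite_Wset by blast
  ultimately show ?thesis by simp
qed

lemma W_take: "w \<in> lists A \<inter> Wset K \<Longrightarrow> take i w \<in> lists A \<inter> Wset K"
  by (auto simp: Wset_def dest: in_set_takeD)
lemma W_drop: "w \<in> lists A \<inter> Wset K \<Longrightarrow> drop i w \<in> lists A \<inter> Wset K"
  by (auto simp: Wset_def dest: in_set_dropD)
lemma W_app: "u @ v \<in> lists A \<inter> Wset K \<Longrightarrow> u \<in> lists A \<inter> Wset K \<and> v \<in> lists A \<inter> Wset K"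
  by (auto simp: Wset_def)

lemma ms_comp: "mould_sum M Op A \<circ> mould_sum N Op A = mould_sum (mstar M N) Op A"
proof (rule ext)+
  fix \<phi> :: "'n mser" and k :: "'n \<Rightarrow> nat"
  define K where "K = mdeg k"
  define W where "W = lists A \<inter> Wset K"
  have fW: "finite W" unfolding W_def using finite_Wset by blast
  define g where "g = (\<lambda>(u,v). M u * N v * wop Op (u @ v) \<phi> k)"
  have 2: "wop Op u (mould_sum N Op A \<phi>) k = (\<Sum>v\<in>W. N v * wop Op (u @ v) \<phi> k)" for u
  proof -
    have "wop Op u (mould_sum N Op A \<phi>) k = wop Op u (\<lambda>l. \<Sum>v\<in>W. N v * wop Op v \<phi> l) k"
      by (rule locality[OF hw rw]) (simp add: W_def ms_eval K_def)
    also have "\<dots> = (\<Sum>v\<in>W. N v * wop Op u (wop Op v \<phi>) k)"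
      by (rule linearity[OF hw])
    finally show ?thesis by (simp add: wop_append)
  qed
  have "(mould_sum M Op A \<circ> mould_sum N Op A) \<phi> k = (\<Sum>u\<in>W. M u * wop Op u (mould_sum N Op A \<phi>) k)"
    by (simp add: ms_eval[OF order_refl] W_def K_def)
  also have "\<dots> = (\<Sum>u\<in>W. \<Sum>v\<in>W. g (u, v))"
    by (simp add: 2 g_def sum_distrib_left mult.assoc)
  also have "\<dots> = (\<Sum>p\<in>W \<times> W. g p)"
    by (simp add: sum.cartesian_product)
  also have "\<dots> = (\<Sum>p\<in>{(u,v). u @ v \<in> W}. g p)"
  proof (rule sum.mono_neutral_right)
    show "finite (W \<times> W)" using fW by simp
    show "{(u,v). u @ v \<in> W} \<subseteq> W \<times> W" using W_app W_def by blast
    show "\<forall>p\<in>W \<times> W - {(u,v). u @ v \<in> W}. g p = 0"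
    proof
      fix p assume p: "p \<in> W \<times> W - {(u,v). u @ v \<in> W}"
      obtain u v where uv: "p = (u, v)" by fastforce
      have "u @ v \<in> lists A" using p uv by (auto simp: W_def)
      then have "u @ v \<notin> Wset (mdeg k)" using p uv by (auto simp: W_def K_def)
      then show "g p = 0" using support uv g_def by auto
    qed
  qed
  also have "{(u,v). u @ v \<in> W} = (\<lambda>(w,i). (take i w, drop i w)) ` (SIGMA w:W. {..length w})"
  proof (rule set_eqI, rule iffI)
    fix p assume "p \<in> {(u,v). u @ v \<in> W}"
    then obtain u v where uv: "p = (u,v)" "u @ v \<in> W" by blast
    then show "p \<in> (\<lambda>(w,i). (take i w, drop i w)) ` (SIGMA w:W. {..length w})"
      by (intro image_eqI[where x="(u @ v, length u)"]) auto
  next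
    fix p assume "p \<in> (\<lambda>(w,i). (take i w, drop i w)) ` (SIGMA w:W. {..length w})"
    then show "p \<in> {(u,v). u @ v \<in> W}" by auto
  qed
  also have "(\<Sum>p\<in>(\<lambda>(w,i). (take i w, drop i w)) ` (SIGMA w:W. {..length w}). g p)
      = (\<Sum>p\<in>(SIGMA w:W. {..length w}). g ((\<lambda>(w,i). (take i w, drop i w)) p))"
  proof (rule sum.reindex[unfolded comp_def])
    show "inj_on (\<lambda>(w,i). (take i w, drop i w)) (SIGMA w:W. {..length w})"
    proof (rule inj_onI, clarsimp)
      fix w i w' i' assume "i \<le> length w" "i' \<le> length w'" "take i w = take i' w'" "drop i w = drop i' w'"
      then show "w = w' \<and> i = i'"
        by (metis append_take_drop_id length_take min.absorb2)
    qed
  qed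
  also have "\<dots> = (\<Sum>(w,i)\<in>(SIGMA w:W. {..length w}). g (take i w, drop i w))"
    by (rule sum.cong[OF refl]) auto
  also have "\<dots> = (\<Sum>w\<in>W. \<Sum>i\<le>length w. g (take i w, drop i w))"
    by (rule sum.Sigma[symmetric]) (auto simp: fW)
  also have "\<dots> = (\<Sum>w\<in>W. mstar M N w * wop Op w \<phi> k)"
    by (simp add: g_def mstar_def sum_distrib_right)
  also have "\<dots> = mould_sum (mstar M N) Op A \<phi> k"
    by (simp add: ms_eval[OF order_refl] W_def K_def)
  finally show "(mould_sum M Op A \<circ> mould_sum N Op A) \<phi> k = mould_sum (mstar M N) Op A \<phi> k" .
qed

lemma ms_delta: "mould_sum delta Op A = id"
proof (rule ext)+
  fix \<phi> :: "'n mser" and k :: "'n \<Rightarrow> nat"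
  define W where "W = lists A \<inter> Wset (mdeg k)"
  have fW: "finite W" unfolding W_def using finite_Wset by blast
  have e: "[] \<in> W" by (simp add: Wset_def W_def)
  have "mould_sum delta Op A \<phi> k = (\<Sum>w\<in>W. delta w * wop Op w \<phi> k)"
    by (simp add: ms_eval[OF order_refl] W_def)
  also have "\<dots> = (\<Sum>w\<in>W. if w = [] then wop Op w \<phi> k else 0)"
    by (rule sum.cong) (auto simp: delta_def)
  also have "\<dots> = wop Op [] \<phi> k" using fW e by (simp add: sum.delta)
  finally show "mould_sum delta Op A \<phi> k = id \<phi> k" by simp
qed

lemma ms_pow: "(mould_sum M Op A) ^^ j = mould_sum (mpow M j) Op A"
  by (induction j) (simp_all add: ms_delta ms_comp)

lemma ms_lin: "(\<lambda>\<phi> k. a * mould_sum M Op A \<phi> k + b * mould_sum N Op A \<phi> k)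
    = mould_sum (\<lambda>w. a * M w + b * N w) Op A"
  by (intro ext) (simp add: ms_eval[OF order_refl] sum_distrib_left sum.distrib algebra_simps)

end



lemma infsum_fin:
  assumes "finite F" "F \<subseteq> S" "\<And>x. x \<in> S - F \<Longrightarrow> f x = 0"
  shows "infsum f S = sum f F"
proof -
  have "infsum f S = infsum f F"
    by (rule infsum_cong_neutral) (use assms in auto)
  then show ?thesis using assms(1) by simp
qed

lemma ldot_subd:
  assumes "valid k n"
  shows "ldot lam (subd k n) = ldot lam k - ldeg lam n"
proof -
  have "ldot lam k - ldot lam (subd k n) = ldeg lam n"
    unfolding ldot_def ldeg_def sum_subtractf[symmetric]
  proof (rule sum.cong[OF refl])
    fix i
    have "(of_nat (subd k n i) :: complex) = of_int (int (subd k n i))" by simp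
    also have "\<dots> = of_nat (k i) - of_int (n i)" using int_subd[OF assms, of i] by simp
    finally have e: "(of_nat (subd k n i) :: complex) = of_nat (k i) - of_int (n i)" .
    show "lam i * of_nat (k i) - lam i * of_nat (subd k n i) = lam i * of_int (n i)"
      unfolding e by (simp add: algebra_simps)
  qed
  then show ?thesis by (simp add: algebra_simps)
qed

context mframe
begin

lemma ms_exp:
  assumes M0: "M [] = 0"
  shows "mexp (mould_sum M Op A) = mould_sum (mexpm M) Op A"
proof (rule ext)+
  fix \<phi> :: "'n mser" and k :: "'n \<Rightarrow> nat"
  define K where "K = mdeg k"
  define W where "W = lists A \<inter> Wset K"
  have fW: "finite W" unfolding W_def using finite_Wset by blast
  have lenW: "w \<in> W \<Longrightarrow> length w \<le> K" for w by (auto simp: W_def Wset_def)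
  have ev: "mould_sum N Op A \<phi> k = (\<Sum>w\<in>W. N w * wop Op w \<phi> k)" for N
    by (simp add: ms_eval[OF order_refl] W_def K_def)
  have "mexp (mould_sum M Op A) \<phi> k = infsum (\<lambda>j. mould_sum (mpow M j) Op A \<phi> k / fact j) UNIV"
    by (simp add: mexp_def ms_pow)
  also have "\<dots> = (\<Sum>j\<le>K. mould_sum (mpow M j) Op A \<phi> k / fact j)"
  proof (rule infsum_fin)
    fix j assume "j \<in> UNIV - {..K}"
    then have "K < j" by auto
    then show "mould_sum (mpow M j) Op A \<phi> k / fact j = 0"
      unfolding ev using mpow_vanish[of M, OF M0] lenW
      by (auto intro!: sum.neutral) (meson le_less_trans)
  qed auto
  also have "\<dots> = (\<Sum>j\<le>K. \<Sum>w\<in>W. mpow M j w / fact j * wop Op w \<phi> k)"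
    by (simp add: ev sum_divide_distrib)
  also have "\<dots> = (\<Sum>w\<in>W. \<Sum>j\<le>K. mpow M j w / fact j * wop Op w \<phi> k)"
    by (rule sum.swap)
  also have "\<dots> = (\<Sum>w\<in>W. mexpm M w * wop Op w \<phi> k)"
  proof (rule sum.cong[OF refl])
    fix w assume w: "w \<in> W"
    have "(\<Sum>j\<le>K. mpow M j w / fact j * wop Op w \<phi> k) = (\<Sum>j\<le>length w. mpow M j w / fact j * wop Op w \<phi> k)"
    proof (rule sum.mono_neutral_right)
      show "{..length w} \<subseteq> {..K}" using lenW[OF w] by auto
      show "\<forall>j\<in>{..K} - {..length w}. mpow M j w / fact j * wop Op w \<phi> k = 0"
        using mpow_vanish[of M, OF M0] by auto
    qed auto
    then show "(\<Sum>j\<le>K. mpow M j w / fact j * wop Op w \<phi> k) = mexpm M w * wop Op w \<phi> k"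
      by (simp add: mexpm_def sum_distrib_right)
  qed
  also have "\<dots> = mould_sum (mexpm M) Op A \<phi> k" by (simp add: ev)
  finally show "mexp (mould_sum M Op A) \<phi> k = mould_sum (mexpm M) Op A \<phi> k" .
qed

lemma ms_minus_id: "(\<lambda>\<psi> l. mould_sum M Op A \<psi> l - \<psi> l) = mould_sum (\<lambda>u. M u - delta u) Op A"
proof -
  have "(\<lambda>\<psi> l. mould_sum M Op A \<psi> l - \<psi> l) = (\<lambda>\<psi> l. 1 * mould_sum M Op A \<psi> l + (-1) * mould_sum delta Op A \<psi> l)"
    by (simp add: ms_delta)
  also have "\<dots> = mould_sum (\<lambda>u. 1 * M u + (-1) * delta u) Op A" by (rule ms_lin)
  also have "\<dots> = mould_sum (\<lambda>u. M u - delta u) Op A" by simp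
  finally show ?thesis .
qed

lemma ms_log:
  assumes M1: "M [] = 1"
  shows "mlog (mould_sum M Op A) = mould_sum (mlogm M) Op A"
proof (rule ext)+
  fix \<phi> :: "'n mser" and k :: "'n \<Rightarrow> nat"
  define M' where "M' = (\<lambda>u. M u - delta u)"
  have M0: "M' [] = 0" using M1 by (simp add: M'_def delta_def)
  define K where "K = mdeg k"
  define W where "W = lists A \<inter> Wset K"
  have fW: "finite W" unfolding W_def using finite_Wset by blast
  have lenW: "w \<in> W \<Longrightarrow> length w \<le> K" for w by (auto simp: W_def Wset_def)
  have ev: "mould_sum N Op A \<phi> k = (\<Sum>w\<in>W. N w * wop Op w \<phi> k)" for N
    by (simp add: ms_eval[OF order_refl] W_def K_def)
  define c :: "nat \<Rightarrow> complex" where "c = (\<lambda>j. (-1) ^ (j + 1) / of_nat j)"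
  have "mlog (mould_sum M Op A) \<phi> k = infsum (\<lambda>j. c j * mould_sum (mpow M' j) Op A \<phi> k) {1..}"
    by (simp add: mlog_def ms_minus_id ms_pow M'_def c_def)
  also have "\<dots> = (\<Sum>j\<in>{1..K}. c j * mould_sum (mpow M' j) Op A \<phi> k)"
  proof (rule infsum_fin)
    fix j assume "j \<in> {1..} - {1..K}"
    then have "K < j" by auto
    then show "c j * mould_sum (mpow M' j) Op A \<phi> k = 0"
      unfolding ev using mpow_vanish[of M', OF M0] lenW
      by (auto intro!: sum.neutral) (meson le_less_trans)
  qed auto
  also have "\<dots> = (\<Sum>j\<in>{1..K}. \<Sum>w\<in>W. c j * mpow M' j w * wop Op w \<phi> k)"
    by (simp add: ev sum_distrib_left mult.assoc)
  also have "\<dots> = (\<Sum>w\<in>W. \<Sum>j\<in>{1..K}. c j * mpow M' j w * wop Op w \<phi> k)"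
    by (rule sum.swap)
  also have "\<dots> = (\<Sum>w\<in>W. mlogm M w * wop Op w \<phi> k)"
  proof (rule sum.cong[OF refl])
    fix w assume w: "w \<in> W"
    have "(\<Sum>j\<in>{1..K}. c j * mpow M' j w * wop Op w \<phi> k) = (\<Sum>j\<in>{1..length w}. c j * mpow M' j w * wop Op w \<phi> k)"
    proof (rule sum.mono_neutral_right)
      show "{1..length w} \<subseteq> {1..K}" using lenW[OF w] by auto
      show "\<forall>j\<in>{1..K} - {1..length w}. c j * mpow M' j w * wop Op w \<phi> k = 0"
        using mpow_vanish[of M', OF M0] by auto
    qed auto
    then show "(\<Sum>j\<in>{1..K}. c j * mpow M' j w * wop Op w \<phi> k) = mlogm M w * wop Op w \<phi> k"
      by (simp add: mlogm_def sum_distrib_right c_def M'_def)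
  qed
  also have "\<dots> = mould_sum (mlogm M) Op A \<phi> k" by (simp add: ev)
  finally show "mlog (mould_sum M Op A) \<phi> k = mould_sum (mlogm M) Op A \<phi> k" .
qed

lemma ms_hcomp: "hcomp (mould_sum M Op A) m = mould_sum (\<lambda>w. if wdeg w = m then M w else 0) Op A"
proof (rule ext)+
  fix \<phi> :: "'n mser" and k :: "'n \<Rightarrow> nat"
  define W where "W = lists A \<inter> Wset (mdeg k)"
  have ev: "mould_sum N Op A \<psi> k = (\<Sum>w\<in>W. N w * wop Op w \<psi> k)" for N \<psi>
    by (simp add: ms_eval[OF order_refl] W_def)
  show "hcomp (mould_sum M Op A) m \<phi> k = mould_sum (\<lambda>w. if wdeg w = m then M w else 0) Op A \<phi> k"
  proof (cases "valid k m")
    case True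
    have "hcomp (mould_sum M Op A) m \<phi> k = (\<Sum>w\<in>W. M w * (wop Op w (mono (subd k m)) k * \<phi> (subd k m)))"
      using True by (simp add: hcomp_eval ev sum_distrib_right mult.assoc)
    also have "\<dots> = (\<Sum>w\<in>W. (if wdeg w = m then M w else 0) * wop Op w \<phi> k)"
    proof (rule sum.cong[OF refl])
      fix w
      show "M w * (wop Op w (mono (subd k m)) k * \<phi> (subd k m)) = (if wdeg w = m then M w else 0) * wop Op w \<phi> k"
        using subd_inj[OF _ True, of "wdeg w"] True
        by (auto simp: homog_eval[OF hw, of w] mono_eq)
    qed
    finally show ?thesis by (simp add: ev)
  next
    case False
    then show ?thesis
      by (auto simp: hcomp_eval ev homog_eval[OF hw] intro!: sum.neutral)
  qed
qed

lemma ms_opsum: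
  "opsum (\<lambda>m \<phi> k. mould_sum (\<lambda>w. if wdeg w = m then M w else 0) Op A \<phi> k / d m) S
    = mould_sum (\<lambda>w. if wdeg w \<in> S then M w / d (wdeg w) else 0) Op A"
proof (rule ext)+
  fix \<phi> :: "'n mser" and k :: "'n \<Rightarrow> nat"
  define W where "W = lists A \<inter> Wset (mdeg k)"
  have fW: "finite W" unfolding W_def using finite_Wset by blast
  have ev: "mould_sum N Op A \<psi> k = (\<Sum>w\<in>W. N w * wop Op w \<psi> k)" for N \<psi>
    by (simp add: ms_eval[OF order_refl] W_def)
  have "opsum (\<lambda>m \<phi> k. mould_sum (\<lambda>w. if wdeg w = m then M w else 0) Op A \<phi> k / d m) S \<phi> k
     = infsum (\<lambda>m. (\<Sum>w\<in>W. (if wdeg w = m then M w else 0) * wop Op w \<phi> k) / d m) S"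
    by (simp add: opsum_def ev)
  also have "\<dots> = (\<Sum>m\<in>S \<inter> wdeg ` W. (\<Sum>w\<in>W. (if wdeg w = m then M w else 0) * wop Op w \<phi> k) / d m)"
  proof (rule infsum_fin)
    fix m assume "m \<in> S - S \<inter> wdeg ` W"
    then have "\<forall>w\<in>W. wdeg w \<noteq> m" by auto
    then show "(\<Sum>w\<in>W. (if wdeg w = m then M w else 0) * wop Op w \<phi> k) / d m = 0"
      by simp
  qed (use fW in auto)
  also have "\<dots> = (\<Sum>m\<in>S \<inter> wdeg ` W. \<Sum>w\<in>W. if wdeg w = m then M w / d m * wop Op w \<phi> k else 0)"
    by (auto simp: sum_divide_distrib intro!: sum.cong)
  also have "\<dots> = (\<Sum>w\<in>W. \<Sum>m\<in>S \<inter> wdeg ` W. if wdeg w = m then M w / d m * wop Op w \<phi> k else 0)"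
    by (rule sum.swap)
  also have "\<dots> = (\<Sum>w\<in>W. (if wdeg w \<in> S then M w / d (wdeg w) else 0) * wop Op w \<phi> k)"
  proof (rule sum.cong[OF refl])
    fix w assume "w \<in> W"
    then show "(\<Sum>m\<in>S \<inter> wdeg ` W. if wdeg w = m then M w / d m * wop Op w \<phi> k else 0)
       = (if wdeg w \<in> S then M w / d (wdeg w) else 0) * wop Op w \<phi> k"
      using fW by (simp add: sum.delta)
  qed
  finally show "opsum (\<lambda>m \<phi> k. mould_sum (\<lambda>w. if wdeg w = m then M w else 0) Op A \<phi> k / d m) S \<phi> k
      = mould_sum (\<lambda>w. if wdeg w \<in> S then M w / d (wdeg w) else 0) Op A \<phi> k"
    by (simp add: ev)
qed

lemma ms_conj:
  "(\<lambda>\<phi>. Flin_inv lam (mould_sum M Op A (Flin lam \<phi>))) = mould_sum (\<lambda>w. exp (- ldeg lam (wdeg w)) * M w) Op A"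
proof (rule ext)+
  fix \<phi> :: "'n mser" and k :: "'n \<Rightarrow> nat"
  define W where "W = lists A \<inter> Wset (mdeg k)"
  have ev: "mould_sum N Op A \<psi> k = (\<Sum>w\<in>W. N w * wop Op w \<psi> k)" for N \<psi>
    by (simp add: ms_eval[OF order_refl] W_def)
  have t: "exp (- ldot lam k) * wop Op w (Flin lam \<phi>) k = exp (- ldeg lam (wdeg w)) * wop Op w \<phi> k" for w
  proof (cases "valid k (wdeg w)")
    case True
    have "exp (- ldot lam k) * exp (ldot lam (subd k (wdeg w))) = exp (- ldeg lam (wdeg w))"
      using ldot_subd[OF True, of lam] by (simp add: exp_add[symmetric])
    then show ?thesis using True
      by (simp add: homog_eval[OF hw, of w] Flin_def)
  next
    case False then show ?thesis by (simp add: homog_eval[OF hw, of w])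
  qed
  show "Flin_inv lam (mould_sum M Op A (Flin lam \<phi>)) k = mould_sum (\<lambda>w. exp (- ldeg lam (wdeg w)) * M w) Op A \<phi> k"
    unfolding Flin_inv_def ev sum_distrib_left
    by (rule sum.cong[OF refl]) (metis (no_types, lifting) t mult.assoc mult.left_commute)
qed

lemma ms_E1: "mould_sum (\<lambda>w. if length w = 1 then 1 else 0) Op A = opsum Op A"
proof (rule ext)+
  fix \<phi> :: "'n mser" and k :: "'n \<Rightarrow> nat"
  have "mould_sum (\<lambda>w. if length w = 1 then 1 else 0) Op A \<phi> k
      = infsum (\<lambda>w. (if length w = 1 then 1 else 0) * wop Op w \<phi> k) ((\<lambda>n. [n]) ` A)"
    unfolding mould_sum_def
  proof (rule infsum_cong_neutral)
    fix w assume "w \<in> lists A - (\<lambda>n. [n]) ` A"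
    then have "length w \<noteq> 1" by (auto simp: length_Suc_conv)
    then show "(if length w = 1 then 1 else 0) * wop Op w \<phi> k = 0" by simp
  qed auto
  also have "\<dots> = infsum (\<lambda>n. Op n \<phi> k) A"
    by (subst infsum_reindex) (auto simp: inj_on_def comp_def)
  finally show "mould_sum (\<lambda>w. if length w = 1 then 1 else 0) Op A \<phi> k = opsum Op A \<phi> k"
    by (simp add: opsum_def)
qed

lemma raise_ms:
  assumes N0: "N [] = 0"
  shows "raise (mould_sum N Op A) 1"
  unfolding raise_def
proof (intro allI impI)
  fix p k assume "mould_sum N Op A (mono p) k \<noteq> 0"
  then have "(\<Sum>w\<in>lists A \<inter> Wset (mdeg k). N w * wop Op w (mono p) k) \<noteq> 0"
    by (simp add: ms_eval[OF order_refl])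
  then obtain w where "N w * wop Op w (mono p) k \<noteq> 0"
    by (meson sum.not_neutral_contains_not_neutral)
  then have "w \<noteq> []" "mdeg p + length w \<le> mdeg k"
    using N0 rw[of w] unfolding raise_def by auto
  then show "mdeg p + 1 \<le> mdeg k" by (cases w) auto
qed

end



lemma Flin_inv_Flin[simp]: "Flin_inv lam (Flin lam \<psi>) = \<psi>"
  by (rule ext) (simp add: Flin_def Flin_inv_def exp_minus field_simps)

lemma Flin_Flin_inv[simp]: "Flin lam (Flin_inv lam \<psi>) = \<psi>"
  by (rule ext) (simp add: Flin_def Flin_inv_def exp_minus field_simps)

lemma mstar_Nil[simp]: "mstar X Y [] = X [] * Y []"
  by (simp add: mstar_def)

lemma mexpm_Nil[simp]: "mexpm X [] = 1"
  by (simp add: mexpm_def delta_def)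

lemma mlogm_Nil[simp]: "mlogm X [] = 0"
  by (simp add: mlogm_def)

context mframe
begin

lemma ms_comp_app: "mould_sum X Op A (mould_sum Y Op A \<psi>) = mould_sum (mstar X Y) Op A \<psi>"
  using fun_cong[OF ms_comp[of X Y], of \<psi>] by simp

lemma step:
  assumes G: "Semtrim lam h i = Flin lam \<circ> mould_sum M Op A" and M1: "M [] = 1"
  shows "\<exists>M'. M' [] = 1 \<and> Semtrim lam h (Suc i) = Flin lam \<circ> mould_sum M' Op A"
proof -
  define L where "L = mlogm M"
  have L0: "L [] = 0" by (simp add: L_def)
  have T: "(\<lambda>\<phi>. Flin_inv lam (Semtrim lam h i \<phi>)) = mould_sum M Op A"
    by (rule ext) (simp add: G)
  have Dc: "Dcomp lam (Semtrim lam h i) m = mould_sum (\<lambda>w. if wdeg w = m then L w else 0) Op A" for m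
    by (simp only: Dcomp_def T ms_log[of M, OF M1] ms_hcomp L_def)
  define MV where "MV = (\<lambda>w. if wdeg w \<in> {m. exp (ldeg lam m) \<noteq> 1} then L w / (1 - exp (ldeg lam (wdeg w))) else 0)"
  have V: "opsum (\<lambda>m \<phi> k. Dcomp lam (Semtrim lam h i) m \<phi> k / (1 - exp (ldeg lam m))) {m. exp (ldeg lam m) \<noteq> 1}
      = mould_sum MV Op A"
    unfolding Dc MV_def by (rule ms_opsum)
  have MV0: "MV [] = 0" by (simp add: MV_def L0)
  have nV: "(\<lambda>\<phi> k. - mould_sum MV Op A \<phi> k) = mould_sum (\<lambda>w. - MV w) Op A"
    using ms_lin[of "-1" MV 0 MV] by simp
  have nMV0: "(\<lambda>w. - MV w) [] = 0" by (simp add: MV0)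
  define ME where "ME = (\<lambda>w. exp (- ldeg lam (wdeg w)) * mexpm MV w)"
  define MF where "MF = mexpm (\<lambda>w. - MV w)"
  have S: "Semtrim lam h (Suc i) = mexp (mould_sum MV Op A) \<circ> Semtrim lam h i \<circ> mexp (mould_sum (\<lambda>w. - MV w) Op A)"
    by (simp only: Semtrim.simps Let_def V nV)
  have C: "mexp (mould_sum MV Op A) (Flin lam \<psi>) = Flin lam (mould_sum ME Op A \<psi>)" for \<psi>
  proof -
    have "Flin_inv lam (mould_sum (mexpm MV) Op A (Flin lam \<psi>)) = mould_sum ME Op A \<psi>"
      using fun_cong[OF ms_conj[of lam "mexpm MV"], of \<psi>] by (simp add: ME_def)
    then have "mould_sum (mexpm MV) Op A (Flin lam \<psi>) = Flin lam (mould_sum ME Op A \<psi>)"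
      by (metis Flin_Flin_inv)
    then show ?thesis by (simp add: ms_exp[of MV, OF MV0])
  qed
  have E2: "mexp (mould_sum (\<lambda>w. - MV w) Op A) = mould_sum MF Op A"
    unfolding MF_def by (rule ms_exp[of "\<lambda>w. - MV w", OF nMV0])
  have "Semtrim lam h (Suc i) = Flin lam \<circ> mould_sum (mstar ME (mstar M MF)) Op A"
    unfolding S by (rule ext) (simp add: G C E2 ms_comp_app del: Semtrim.simps)
  moreover have "mstar ME (mstar M MF) [] = 1"
    by (simp add: ME_def MF_def M1 ldeg_def)
  ultimately show ?thesis by blast
qed

lemma all_r:
  assumes "Fsub lam h = Flin lam \<circ> mould_sum M0 Op A" "M0 [] = 1"
  shows "\<exists>M. M [] = 1 \<and> Semtrim lam h r = Flin lam \<circ> mould_sum M Op A"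
proof (induction r)
  case 0 then show ?case using assms by auto
next
  case (Suc r)
  then obtain M where "M [] = 1" "Semtrim lam h r = Flin lam \<circ> mould_sum M Op A" by blast
  then show ?case using step by blast
qed

end



lemma mpow_len:
  assumes "\<And>w. M w = fps_nth a (length w)"
  shows "mpow M j w = fps_nth (a ^ j) (length w)"
proof (induction j arbitrary: w)
  case 0 then show ?case by (simp add: delta_def)
next
  case (Suc j)
  have "mpow M (Suc j) w = (\<Sum>i\<le>length w. fps_nth a i * fps_nth (a ^ j) (length w - i))"
    by (auto simp: mstar_def Suc.IH assms min_def intro!: sum.cong)
  also have "\<dots> = fps_nth (a * a ^ j) (length w)"
    by (simp add: fps_mult_nth atLeast0AtMost)
  finally show ?case by simp
qed

definition E1 :: "'a list \<Rightarrow> complex" where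
  "E1 w = (if length w = 1 then 1 else 0)"

definition M0 :: "'a list \<Rightarrow> complex" where
  "M0 w = (if length w \<le> 1 then 1 else 0)"

lemma mpow_E1: "mpow E1 j w = (if length w = j then 1 else 0)"
  by (subst mpow_len[where a = fps_X]) (auto simp: E1_def)

lemma mexpm_E1: "mexpm E1 w = 1 / fact (length w)"
proof -
  have "mexpm E1 w = (\<Sum>j\<le>length w. if length w = j then 1 / fact j else 0)"
    unfolding mexpm_def mpow_E1 by (rule sum.cong) auto
  then show ?thesis by (simp add: sum.delta)
qed

lemma M0_minus: "M0 u - delta u = E1 u"
  by (cases u) (auto simp: M0_def delta_def E1_def)

lemma mlogm_M0: "mlogm M0 w = fps_nth (fps_ln 1) (length w)"
proof -
  have "mlogm M0 w = (\<Sum>j\<in>{1..length w}. (-1) ^ (j + 1) / of_nat j * (if length w = j then 1 else 0))"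
    by (simp add: mlogm_def M0_minus mpow_E1)
  also have "\<dots> = (if 1 \<le> length w then (-1) ^ (length w + 1) / of_nat (length w) else 0)"
    by (simp add: if_distrib sum.delta' cong: if_cong)
  also have "\<dots> = fps_nth (fps_ln 1) (length w)"
  proof (cases "length w")
    case 0 then show ?thesis by simp
  next
    case (Suc n) then show ?thesis by (simp add: fps_ln_nth)
  qed
  finally show ?thesis .
qed

lemma exp_ln_coeff:
  "(\<Sum>j\<le>n. fps_nth (fps_ln (1::complex) ^ j) n / fact j) = (if n \<le> 1 then 1 else 0)"
proof -
  have X: "(fps_exp (1::complex) - 1) oo fps_ln 1 = fps_X"
    using fps_inv_fps_exp_compose(2)[of "1::complex"] fps_ln_fps_exp_inv[of "1::complex"] by simp
  have "fps_nth fps_X n = (\<Sum>i\<in>{0..n}. fps_nth (fps_exp (1::complex) - 1) i * fps_nth (fps_ln 1 ^ i) n)"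
    unfolding X[symmetric] by (rule fps_compose_nth)
  also have "\<dots> = (\<Sum>i\<le>n. fps_nth (fps_ln 1 ^ i) n / fact i - (if i = 0 then fps_nth (fps_ln 1 ^ i) n else 0))"
    by (auto simp: atLeast0AtMost algebra_simps intro!: sum.cong)
  also have "\<dots> = (\<Sum>i\<le>n. fps_nth (fps_ln (1::complex) ^ i) n / fact i) - fps_nth (1::complex fps) n"
    by (simp add: sum_subtractf sum.delta')
  finally have "(\<Sum>i\<le>n. fps_nth (fps_ln (1::complex) ^ i) n / fact i) = fps_nth fps_X n + fps_nth (1::complex fps) n"
    by (simp add: algebra_simps)
  then show ?thesis by auto
qed

lemma mexpm_mlogm_M0: "mexpm (mlogm M0) = M0"
proof
  fix w :: "'a list"
  have "mexpm (mlogm M0) w = (\<Sum>j\<le>length w. fps_nth (fps_ln (1::complex) ^ j) (length w) / fact j)"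
    unfolding mexpm_def by (subst mpow_len[where a = "fps_ln 1"]) (auto simp: mlogm_M0)
  then show "mexpm (mlogm M0) w = M0 w" by (simp add: exp_ln_coeff M0_def)
qed



lemma mdeg_unitv: "mdeg (unitv j :: 'n::finite \<Rightarrow> nat) = 1"
proof -
  have "(\<Sum>i\<in>UNIV. (if i = j then 1 else 0 :: nat)) = 1" by (simp add: sum.delta')
  then show ?thesis by (simp add: mdeg_def unitv_def)
qed

lemma MP:
  fixes lam :: "'n::finite \<Rightarrow> complex" and h :: "'n \<Rightarrow> 'n mser"
  assumes h_order: "\<forall>j m. mdeg m < 2 \<longrightarrow> h j m = 0" and eq: "mdeg p = mdeg k"
  shows "mpow_coeff (diffeo lam h) p k = (if p = k then exp (ldot lam k) else 0)"
proof -
  define f where "f = diffeo lam h"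
  define P where "P = Sigma (UNIV::'n set) (\<lambda>j. {..<p j})"
  define Q where "Q = {a \<in> PiE P (\<lambda>_. {x. x \<le> k}). \<forall>i. (\<Sum>q\<in>P. a q i) = k i}"
  define a0 where "a0 = restrict (\<lambda>q. unitv (fst q)) P"
  have fP: "finite P" by (simp add: P_def)
  have mc: "mpow_coeff f p k = (\<Sum>a\<in>Q. \<Prod>q\<in>P. f (fst q) (a q))"
    by (simp add: mpow_coeff_def P_def Q_def Let_def)
  have fQ: "finite Q"
  proof -
    have "{x. x \<le> k} \<subseteq> Sdeg (mdeg k)"
      by (auto simp: Sdeg_def mdeg_def le_fun_def intro: sum_mono)
    then have "finite {x. x \<le> k}" using finite_Sdeg finite_subset by blast
    then have "finite (PiE P (\<lambda>_. {x. x \<le> k}))" using fP by (simp add: finite_PiE)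
    then show ?thesis unfolding Q_def by (rule finite_subset[rotated]) blast
  qed
  have fnz: "x = unitv j \<or> 2 \<le> mdeg x" if "f j x \<noteq> 0" for j x
    using that h_order by (auto simp: f_def diffeo_def split: if_splits)
  have f_unit: "f j (unitv j) = exp (lam j)" for j
    using h_order mdeg_unitv[of j] by (simp add: f_def diffeo_def)
  have cardP: "card P = mdeg p" by (simp add: P_def mdeg_def)
  have claim1: "a = a0" if aQ: "a \<in> Q" and nz: "(\<Prod>q\<in>P. f (fst q) (a q)) \<noteq> 0" for a
  proof -
    have fa: "\<forall>q\<in>P. f (fst q) (a q) \<noteq> 0" using nz fP by auto
    have "(\<Sum>q\<in>P. mdeg (a q)) = (\<Sum>q\<in>P. \<Sum>i\<in>UNIV. a q i)" by (simp add: mdeg_def)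
    also have "\<dots> = (\<Sum>i\<in>UNIV. \<Sum>q\<in>P. a q i)" by (rule sum.swap)
    also have "\<dots> = (\<Sum>i\<in>UNIV. k i)" using aQ by (simp add: Q_def)
    finally have s: "(\<Sum>q\<in>P. mdeg (a q)) = mdeg k" by (simp add: mdeg_def)
    have all: "\<forall>q\<in>P. a q = unitv (fst q)"
    proof (rule ccontr)
      assume "\<not> (\<forall>q\<in>P. a q = unitv (fst q))"
      then obtain q0 where q0: "q0 \<in> P" "a q0 \<noteq> unitv (fst q0)" by blast
      have big: "2 \<le> mdeg (a q0)" using fnz fa q0 by blast
      have ge1: "\<forall>q\<in>P. 1 \<le> mdeg (a q)"
      proof
        fix q assume "q \<in> P"
        then have "a q = unitv (fst q) \<or> 2 \<le> mdeg (a q)" using fnz fa by blast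
        then show "1 \<le> mdeg (a q)" using mdeg_unitv[of "fst q"] by auto
      qed
      have "(\<Sum>q\<in>P. (1::nat)) < (\<Sum>q\<in>P. mdeg (a q))"
      proof (rule sum_strict_mono_ex1)
        show "\<exists>q\<in>P. 1 < mdeg (a q)" using q0 big by (intro bexI[of _ q0]) auto
      qed (use fP ge1 in auto)
      then have "card P < mdeg k" using s by simp
      then show False using cardP eq by simp
    qed
    show "a = a0"
    proof
      fix q show "a q = a0 q"
      proof (cases "q \<in> P")
        case True then show ?thesis using all by (simp add: a0_def)
      next
        case False
        have "a \<in> PiE P (\<lambda>_. {x. x \<le> k})" using aQ by (simp add: Q_def)
        then have "a q = undefined" using False by (rule PiE_arb)
        then show ?thesis using False by (simp add: a0_def)
      qed
    qed
  qed
  have a0sum: "(\<Sum>q\<in>P. a0 q i) = p i" for i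
  proof -
    have "(\<Sum>q\<in>P. a0 q i) = (\<Sum>q\<in>P. unitv (fst q) i)" by (rule sum.cong) (auto simp: a0_def)
    also have "\<dots> = (\<Sum>(j,t)\<in>P. unitv j i)" by (simp add: split_def)
    also have "\<dots> = (\<Sum>j\<in>UNIV. \<Sum>t\<in>{..<p j}. unitv j i)" unfolding P_def
      by (rule sum.Sigma[symmetric]) auto
    also have "\<dots> = (\<Sum>j\<in>UNIV. if i = j then p j else 0)" by (rule sum.cong) (auto simp: unitv_def)
    also have "\<dots> = p i" by (simp add: sum.delta sum.delta')
    finally show ?thesis .
  qed
  show ?thesis
  proof (cases "p = k")
    case True
    have a0Q: "a0 \<in> Q"
    proof -
      have "a0 \<in> PiE P (\<lambda>_. {x. x \<le> k})"
        unfolding a0_def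
      proof (rule restrict_PiE_iff[THEN iffD2], intro ballI)
        fix q assume "q \<in> P"
        then have "snd q < k (fst q)" using True by (auto simp: P_def)
        then show "unitv (fst q) \<in> {x. x \<le> k}" by (auto simp: unitv_def le_fun_def)
      qed
      then show ?thesis using a0sum True by (simp add: Q_def)
    qed
    have "mpow_coeff f p k = (\<Sum>a\<in>{a0}. \<Prod>q\<in>P. f (fst q) (a q))"
      unfolding mc
    proof (rule sum.mono_neutral_right)
      show "\<forall>a\<in>Q - {a0}. (\<Prod>q\<in>P. f (fst q) (a q)) = 0" using claim1 by blast
    qed (use fQ a0Q in auto)
    also have "\<dots> = (\<Prod>q\<in>P. exp (lam (fst q)))"
      by (simp add: a0_def f_unit)
    also have "\<dots> = exp (\<Sum>q\<in>P. lam (fst q))" by (simp add: exp_sum fP)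
    also have "(\<Sum>q\<in>P. lam (fst q)) = (\<Sum>(j,t)\<in>P. lam j)" by (simp add: split_def)
    also have "\<dots> = (\<Sum>j\<in>UNIV. \<Sum>t\<in>{..<p j}. lam j)" unfolding P_def
      by (rule sum.Sigma[symmetric]) auto
    also have "\<dots> = ldot lam p" by (simp add: ldot_def mult.commute)
    finally show ?thesis using True by (simp add: f_def)
  next
    case False
    have "a0 \<notin> Q"
    proof
      assume "a0 \<in> Q"
      then have "\<forall>i. p i = k i" using a0sum by (simp add: Q_def)
      then show False using False by auto
    qed
    then have "mpow_coeff f p k = 0" unfolding mc using claim1 by (auto intro!: sum.neutral)
    then show ?thesis using False by (simp add: f_def)
  qed
qed



lemma Fsub_mono:
  "Fsub lam h (mono p) k = (if mdeg p \<le> mdeg k then mpow_coeff (diffeo lam h) p k else 0)"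
proof -
  have "Fsub lam h (mono p) k = (\<Sum>m\<in>Sdeg (mdeg k). if m = p then mpow_coeff (diffeo lam h) m k else 0)"
    unfolding Fsub_def subst_def Sdeg_def by (rule sum.cong) (auto simp: mono_eq)
  moreover have "p \<in> Sdeg (mdeg k) \<longleftrightarrow> mdeg p \<le> mdeg k" by (simp add: Sdeg_def)
  ultimately show ?thesis by (simp only: sum.delta[OF finite_Sdeg])
qed

lemma Fsub_repr: "Fsub lam h \<phi> k = (\<Sum>p\<in>Sdeg (mdeg k). Fsub lam h (mono p) k * \<phi> p)"
proof -
  have "Fsub lam h \<phi> k = (\<Sum>m\<in>Sdeg (mdeg k). \<phi> m * mpow_coeff (diffeo lam h) m k)"
    by (simp add: Fsub_def subst_def Sdeg_def)
  also have "\<dots> = (\<Sum>p\<in>Sdeg (mdeg k). Fsub lam h (mono p) k * \<phi> p)"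
    by (rule sum.cong) (auto simp: Fsub_mono Sdeg_def)
  finally show ?thesis .
qed

definition T0 :: "('n::finite \<Rightarrow> complex) \<Rightarrow> ('n \<Rightarrow> 'n mser) \<Rightarrow> 'n mop" where
  "T0 lam h = (\<lambda>\<phi> k. Flin_inv lam (Fsub lam h \<phi>) k - \<phi> k)"

lemma Bop_T0: "Bop lam h n = hcomp (T0 lam h) n"
  by (simp add: Bop_def T0_def)

lemma T0_eval: "T0 lam h \<phi> k = exp (- ldot lam k) * Fsub lam h \<phi> k - \<phi> k"
  by (simp add: T0_def Flin_inv_def)

lemma raise_T0:
  assumes h_order: "\<forall>j m. mdeg m < 2 \<longrightarrow> h j m = 0"
  shows "raise (T0 lam h) 1"
  unfolding raise_def
proof (intro allI impI)
  fix p k assume nz: "T0 lam h (mono p) k \<noteq> 0"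
  show "mdeg p + 1 \<le> mdeg k"
  proof (rule ccontr)
    assume "\<not> mdeg p + 1 \<le> mdeg k"
    then consider "mdeg p = mdeg k" | "mdeg k < mdeg p" by linarith
    then show False
    proof cases
      case 1
      have "T0 lam h (mono p) k = 0"
        using MP[OF h_order 1, of lam]
        by (simp add: T0_eval Fsub_mono 1 mono_eq exp_minus)
      then show False using nz by simp
    next
      case 2
      then have "k \<noteq> p" by auto
      then have "T0 lam h (mono p) k = 0" using 2 by (simp add: T0_eval Fsub_mono mono_eq)
      then show False using nz by simp
    qed
  qed
qed

lemma T0_repr: "T0 lam h \<phi> k = (\<Sum>p\<in>Sdeg (mdeg k). T0 lam h (mono p) k * \<phi> p)"
proof -
  have kS: "k \<in> Sdeg (mdeg k)" by (simp add: Sdeg_def)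
  have s1: "(\<Sum>p\<in>Sdeg (mdeg k). mono p k * \<phi> p) = \<phi> k"
  proof -
    have "(\<Sum>p\<in>Sdeg (mdeg k). mono p k * \<phi> p) = (\<Sum>p\<in>Sdeg (mdeg k). if k = p then \<phi> p else 0)"
      by (rule sum.cong) (auto simp: mono_eq)
    also have "\<dots> = \<phi> k" using kS by (simp only: sum.delta'[OF finite_Sdeg] if_True)
    finally show ?thesis .
  qed
  have "(\<Sum>p\<in>Sdeg (mdeg k). T0 lam h (mono p) k * \<phi> p)
      = (\<Sum>p\<in>Sdeg (mdeg k). exp (- ldot lam k) * (Fsub lam h (mono p) k * \<phi> p) - mono p k * \<phi> p)"
    by (rule sum.cong) (auto simp: T0_eval algebra_simps)
  also have "\<dots> = exp (- ldot lam k) * (\<Sum>p\<in>Sdeg (mdeg k). Fsub lam h (mono p) k * \<phi> p) - \<phi> k"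
    by (simp add: sum_subtractf sum_distrib_left s1)
  also have "\<dots> = T0 lam h \<phi> k"
    by (simp only: T0_eval Fsub_repr[of lam h \<phi> k, symmetric])
  finally show ?thesis by simp
qed

lemma decomp:
  fixes T :: "'n::finite mop"
  assumes repr: "\<And>\<psi> l. T \<psi> l = (\<Sum>p\<in>Sdeg (mdeg l). T (mono p) l * \<psi> p)"
  shows "infsum (\<lambda>n. hcomp T n \<phi> k) UNIV = T \<phi> k"
proof -
  define S :: "('n \<Rightarrow> nat) set" where "S = Sdeg (mdeg k)"
  define g where "g = (\<lambda>(p::'n\<Rightarrow>nat) i. int (k i) - int (p i))"
  have fS: "finite S" by (simp add: S_def finite_Sdeg)
  have vg: "valid k (g p)" for p by (simp add: valid_def g_def)
  have sg: "subd k (g p) = p" for p by (simp add: subd_def g_def)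
  have "infsum (\<lambda>n. hcomp T n \<phi> k) UNIV = sum (\<lambda>n. hcomp T n \<phi> k) (g ` S)"
  proof (rule infsum_fin)
    fix n assume n: "n \<in> UNIV - g ` S"
    show "hcomp T n \<phi> k = 0"
    proof (cases "valid k n")
      case True
      define q where "q = subd k n"
      have "g q = n" using int_subd[OF True] by (auto simp: g_def q_def)
      then have qS: "q \<notin> S" using n by auto
      have "T (mono q) k = (\<Sum>p\<in>S. T (mono p) k * mono q p)" unfolding S_def by (rule repr)
      also have "\<dots> = 0" using qS by (auto simp: mono_eq intro!: sum.neutral)
      finally show ?thesis by (simp add: hcomp_eval q_def)
    next
      case False then show ?thesis by (simp add: hcomp_eval)
    qed
  qed (use fS in auto)
  also have "\<dots> = (\<Sum>p\<in>S. hcomp T (g p) \<phi> k)"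
  proof (rule sum.reindex[unfolded comp_def])
    show "inj_on g S"
    proof (rule inj_onI)
      fix p p' assume "g p = g p'"
      then have "\<forall>i. int (p i) = int (p' i)" by (auto simp: g_def fun_eq_iff)
      then show "p = p'" by auto
    qed
  qed
  also have "\<dots> = (\<Sum>p\<in>S. T (mono p) k * \<phi> p)"
    by (rule sum.cong[OF refl]) (simp only: hcomp_eval vg sg if_True)
  also have "\<dots> = T \<phi> k" unfolding S_def by (rule repr[of \<phi> k, symmetric])
  finally show ?thesis .
qed

lemma frame_B:
  assumes h_order: "\<forall>j m. mdeg m < 2 \<longrightarrow> h j m = 0"
  shows "mframe (Bop lam h)"
  unfolding mframe_def Bop_T0 using homog_hcomp raise_hcomp[OF raise_T0[OF h_order]] by blast

lemma eq_B:
  assumes h_order: "\<forall>j m. mdeg m < 2 \<longrightarrow> h j m = 0"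
    and A_supp: "\<forall>n. Bop lam h n \<noteq> (\<lambda>\<phi> k. 0) \<longrightarrow> n \<in> A"
  shows "(\<lambda>\<phi>. Flin_inv lam (Fsub lam h \<phi>)) = mould_sum M0 (Bop lam h) A"
proof -
  interpret B: mframe "Bop lam h" A by (rule frame_B[OF h_order])
  have M0eq: "M0 = (\<lambda>w. 1 * delta w + 1 * E1 w)"
    by (rule ext) (auto simp: M0_def delta_def E1_def le_Suc_eq)
  have E1eq: "mould_sum E1 (Bop lam h) A = opsum (Bop lam h) A"
    using B.ms_E1 by (simp add: E1_def[abs_def])
  have op: "opsum (Bop lam h) A \<phi> k = T0 lam h \<phi> k" for \<phi> k
  proof -
    have "opsum (Bop lam h) A \<phi> k = infsum (\<lambda>n. hcomp (T0 lam h) n \<phi> k) UNIV"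
      unfolding opsum_def
    proof (rule infsum_cong_neutral)
      fix n assume "n \<in> UNIV - A"
      then have "Bop lam h n = (\<lambda>\<phi> k. 0)" using A_supp by blast
      then show "hcomp (T0 lam h) n \<phi> k = 0" by (simp add: Bop_T0)
    qed (auto simp: Bop_T0)
    also have "\<dots> = T0 lam h \<phi> k" by (rule decomp) (rule T0_repr)
    finally show ?thesis .
  qed
  have "mould_sum M0 (Bop lam h) A = (\<lambda>\<phi> k. 1 * mould_sum delta (Bop lam h) A \<phi> k + 1 * mould_sum E1 (Bop lam h) A \<phi> k)"
    unfolding M0eq by (rule B.ms_lin[symmetric])
  also have "\<dots> = (\<lambda>\<phi> k. \<phi> k + T0 lam h \<phi> k)"
    by (simp add: B.ms_delta E1eq op)
  also have "\<dots> = (\<lambda>\<phi>. Flin_inv lam (Fsub lam h \<phi>))"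
    by (simp add: T0_def)
  finally show ?thesis by simp
qed



theorem mainTheorem4:
  fixes lam :: "'n::finite \<Rightarrow> complex" and h :: "'n \<Rightarrow> 'n mser"
    and A AA :: "('n \<Rightarrow> int) set" and r :: nat
  assumes h_order: "\<forall>j m. mdeg m < 2 \<longrightarrow> h j m = 0"
    and h_analytic: "\<exists>\<rho>>0. \<forall>j. (\<lambda>m. norm (h j m) * \<rho> ^ mdeg m) summable_on UNIV"
    and A_supp: "\<forall>n. Bop lam h n \<noteq> (\<lambda>\<phi> k. 0) \<longrightarrow> n \<in> A"
    and A_add: "\<forall>a\<in>A. \<forall>b\<in>A. (\<lambda>i. a i + b i) \<in> A"
    and AA_supp: "\<forall>m. Dop lam h m \<noteq> (\<lambda>\<phi> k. 0) \<longrightarrow> m \<in> AA"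
    and AA_add: "\<forall>a\<in>AA. \<forall>b\<in>AA. (\<lambda>i. a i + b i) \<in> AA"
  shows "\<exists>Sem sem.
           Semtrim lam h r = Flin lam \<circ> mould_sum Sem (Dop lam h) AA \<and>
           Semtrim lam h r = Flin lam \<circ> mould_sum sem (Bop lam h) A"
proof -
  interpret B: mframe "Bop lam h" A by (rule frame_B[OF h_order])
  have eB: "(\<lambda>\<phi>. Flin_inv lam (Fsub lam h \<phi>)) = mould_sum M0 (Bop lam h) A"
    by (rule eq_B[OF h_order A_supp])
  have toF: "Fsub lam h = Flin lam \<circ> X" if "(\<lambda>\<phi>. Flin_inv lam (Fsub lam h \<phi>)) = X" for X
  proof
    fix \<phi>
    have "Flin_inv lam (Fsub lam h \<phi>) = X \<phi>" using fun_cong[OF that, of \<phi>] by simp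
    then show "Fsub lam h \<phi> = (Flin lam \<circ> X) \<phi>" by (metis Flin_Flin_inv comp_apply)
  qed
  have M01: "M0 [] = 1" by (simp add: M0_def)
  obtain sem where sem: "Semtrim lam h r = Flin lam \<circ> mould_sum sem (Bop lam h) A"
    using B.all_r[OF toF[OF eB] M01] by blast
  define L0 :: "('n \<Rightarrow> int) list \<Rightarrow> complex" where "L0 = mlogm M0"
  have L00: "L0 [] = 0" by (simp add: L0_def)
  have Dop_h: "Dop lam h m = hcomp (mould_sum L0 (Bop lam h) A) m" for m
    by (simp only: Dop_def Dcomp_def eB B.ms_log[of M0, OF M01] L0_def)
  have Dop_eq: "Dop lam h m = mould_sum (\<lambda>w. if wdeg w = m then L0 w else 0) (Bop lam h) A" for m
    by (simp only: Dop_h B.ms_hcomp)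
  have frD: "mframe (Dop lam h)"
    unfolding mframe_def Dop_h
    using homog_hcomp raise_hcomp[OF B.raise_ms[of L0, OF L00]] by blast
  interpret D: mframe "Dop lam h" AA by (rule frD)
  have e1: "(\<lambda>w. 1 / fact (length w)) = mexpm E1"
    by (rule ext) (simp add: mexpm_E1)
  have e2: "mould_sum (mexpm E1) (Dop lam h) AA = mexp (mould_sum E1 (Dop lam h) AA)"
    by (rule D.ms_exp[symmetric]) (simp add: E1_def)
  have e3: "mould_sum E1 (Dop lam h) AA = opsum (Dop lam h) AA"
    using D.ms_E1 by (simp add: E1_def[abs_def])
  have e4: "opsum (Dop lam h) AA = opsum (Dop lam h) UNIV"
  proof (rule ext)+
    fix \<phi> k
    show "opsum (Dop lam h) AA \<phi> k = opsum (Dop lam h) UNIV \<phi> k"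
      unfolding opsum_def
    proof (rule infsum_cong_neutral)
      fix m assume "m \<in> UNIV - AA"
      then have "Dop lam h m = (\<lambda>\<phi> k. 0)" using AA_supp by blast
      then show "Dop lam h m \<phi> k = 0" by simp
    qed auto
  qed
  have e5: "opsum (Dop lam h) UNIV = mould_sum L0 (Bop lam h) A"
  proof -
    have "opsum (\<lambda>m \<phi> k. mould_sum (\<lambda>w. if wdeg w = m then L0 w else 0) (Bop lam h) A \<phi> k / (\<lambda>_. 1) m) UNIV
        = mould_sum (\<lambda>w. if wdeg w \<in> UNIV then L0 w / (\<lambda>_. 1) (wdeg w) else 0) (Bop lam h) A"
      by (rule B.ms_opsum)
    moreover have "(\<lambda>m \<phi> k. mould_sum (\<lambda>w. if wdeg w = m then L0 w else 0) (Bop lam h) A \<phi> k / (\<lambda>_. 1) m) = Dop lam h"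
      by (rule ext) (simp add: Dop_eq)
    moreover have "(\<lambda>w. if wdeg w \<in> UNIV then L0 w / (\<lambda>_. 1) (wdeg w) else 0) = L0"
      by simp
    ultimately show ?thesis by simp
  qed
  have e6: "mexp (mould_sum L0 (Bop lam h) A) = mould_sum M0 (Bop lam h) A"
    using B.ms_exp[of L0, OF L00] by (simp add: L0_def mexpm_mlogm_M0)
  have eD: "(\<lambda>\<phi>. Flin_inv lam (Fsub lam h \<phi>)) = mould_sum (\<lambda>w. 1 / fact (length w)) (Dop lam h) AA"
    unfolding e1 e2 e3 e4 e5 e6 by (rule eB)
  have M11: "(\<lambda>w::('n \<Rightarrow> int) list. 1 / fact (length w)) [] = (1::complex)" by simp
  obtain Sem where Sem: "Semtrim lam h r = Flin lam \<circ> mould_sum Sem (Dop lam h) AA"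
    using D.all_r[OF toF[OF eD] M11] by blast
  show ?thesis using Sem sem by blast
qed

end
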